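(* Let $A_1,\ldots,A_n$ be events in a probability space, let $X$ be the number of these events that occur, and for $1\le j\le n$ let $S_j=\sum_{1\le i_1<\cdots<i_j\le n}P(A_{i_1}\cdots A_{i_j})$. Let $r,k$ be integers with $1\le r\le k<n$. For $1\le i\le r$ and indices $1\le r_1<\cdots<r_{k+1-i}\le n$, let $$T(r_1,\ldots,r_{k+1-i})=\{(t_1,\ldots,t_i): r_{k+1-i}<t_1<\cdots<t_i\le n\},$$ and let $$M_i=\sum_{1\le r_1<\cdots<r_{k+1-i}\le n}\ \max_{(t_1,\ldots,t_i)\in T(r_1,\ldots,r_{k+1-i})}P(A_{r_1}\cdots A_{r_{k+1-i}}A_{t_1}\cdots A_{t_i}).$$ If $r+k$ is odd, then $$P(X\ge r)\ge\sum_{j=r}^{k}(-1)^{r+j}\binom{j-1}{r-1}S_j+\sum_{i=1}^{r}\binom{k-i}{r-i}M_i,$$ and if $r+k$ is even, then $$P(X\ge r)\le\sum_{j=r}^{k}(-1)^{r+j}\binom{j-1}{r-1}S_j-\sum_{i=1}^{r}\binom{k-i}{r-i}M_i.$$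
   Context: Binomial convention: for integers $s,t$, $\binom{t}{s}=0$ if $\min(s,t)<0$ or $s>t$; otherwise $\binom{t}{s}=\frac{t!}{s!(t-s)!}$. $A_{i_1}\cdots A_{i_j}$ denotes the intersection of the events. A maximum over an empty set $T(\cdot)$ is taken to be $0$. *)

theory Defs
  imports "HOL-Probability.Probability"
begin

definition num_occ :: "(nat \<Rightarrow> 'a set) \<Rightarrow> nat \<Rightarrow> 'a \<Rightarrow> nat" where
  "num_occ A n w = card {i \<in> {1..n}. w \<in> A i}"

definition S_sum :: "'a measure \<Rightarrow> (nat \<Rightarrow> 'a set) \<Rightarrow> nat \<Rightarrow> nat \<Rightarrow> real" where
  "S_sum M A n j = (\<Sum>J\<in>{J. J \<subseteq> {1..n} \<and> card J = j}. measure M (\<Inter>i\<in>J. A i))"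

definition T_set :: "nat \<Rightarrow> nat set \<Rightarrow> nat \<Rightarrow> nat set set" where
  "T_set n R i = {U. U \<subseteq> {Max R<..n} \<and> card U = i}"

definition max0 :: "real set \<Rightarrow> real" where
  "max0 X = (if X = {} then 0 else Max X)"

definition M_sum :: "'a measure \<Rightarrow> (nat \<Rightarrow> 'a set) \<Rightarrow> nat \<Rightarrow> nat \<Rightarrow> nat \<Rightarrow> real" where
  "M_sum M A n k i = (\<Sum>R\<in>{R. R \<subseteq> {1..n} \<and> card R = k + 1 - i}.
      max0 ((\<lambda>U. measure M (\<Inter>j\<in>R \<union> U. A j)) ` T_set n R i))"

end

theory Submission
  imports Defs
begin


definition cc :: "nat \<Rightarrow> nat \<Rightarrow> nat \<Rightarrow> real" where
  "cc x i m = (if i \<le> x then real ((x - i) choose m) else 0)"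

definition GG :: "nat \<Rightarrow> nat \<Rightarrow> nat \<Rightarrow> real" where
  "GG s d x = (\<Sum>t\<le>d. (-1)^t * real ((s+t) choose s) * real (x choose (s+1+t)))"

definition EE :: "nat \<Rightarrow> nat \<Rightarrow> nat \<Rightarrow> real" where
  "EE s d x = (-1)^(d+1) * ((if s+1 \<le> x then 1 else 0) - GG s d x)"

definition FF :: "nat \<Rightarrow> nat \<Rightarrow> nat \<Rightarrow> real" where
  "FF s d x = (\<Sum>m\<le>s. real ((d+m) choose m) * cc x (s+1-m) (d+1+m))"

lemma cc_pascal: "cc (Suc x) i (Suc n) = cc x i (Suc n) + cc x i n"
proof (cases "i \<le> x")
  case True
  then have "Suc x - i = Suc (x - i)" by simp
  then show ?thesis using True by (simp add: cc_def)
next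
  case False
  then show ?thesis by (cases "i = Suc x") (auto simp: cc_def)
qed

lemma cc_pos: "cc x i (Suc n) = real ((x - i) choose (Suc n))"
  by (simp add: cc_def)

lemma EE_step:
  "EE (Suc s) (Suc d) (Suc x) = EE (Suc s) (Suc d) x + EE (Suc s) d x + EE s (Suc d) x"
proof -
  let ?f = "\<lambda>t. (-1::real)^t * real ((Suc s + t) choose Suc s) * real (x choose (Suc s + t))"
  have g1: "GG (Suc s) (Suc d) (Suc x) = GG (Suc s) (Suc d) x + (\<Sum>t\<le>Suc d. ?f t)"
    unfolding GG_def by (simp add: sum.distrib[symmetric] algebra_simps)
  have pas: "\<And>t. real ((Suc s + t) choose Suc s) = real ((s+t) choose s) + real ((s+t) choose Suc s)"
    by simp
  have g2: "(\<Sum>t\<le>Suc d. ?f t) = GG s (Suc d) x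
      + (\<Sum>t\<le>Suc d. (-1::real)^t * real ((s + t) choose Suc s) * real (x choose (Suc s + t)))"
    unfolding GG_def pas by (simp add: sum.distrib[symmetric] algebra_simps)
  have g3: "(\<Sum>t\<le>Suc d. (-1::real)^t * real ((s + t) choose Suc s) * real (x choose (Suc s + t)))
      = - GG (Suc s) d x"
    unfolding GG_def sum.atMost_Suc_shift by (simp add: sum_negf[symmetric])
  have g: "GG (Suc s) (Suc d) (Suc x) = GG (Suc s) (Suc d) x + GG s (Suc d) x - GG (Suc s) d x"
    using g1 g2 g3 by linarith
  show ?thesis unfolding EE_def g by (simp add: algebra_simps)
qed

lemma FF_step:
  "FF (Suc s) (Suc d) (Suc x) = FF (Suc s) (Suc d) x + FF (Suc s) d x + FF s (Suc d) x"
proof -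
  have a: "\<And>m. cc (Suc x) (Suc s + 1 - m) (Suc d + 1 + m) = cc x (Suc s + 1 - m) (Suc d + 1 + m) + cc x (Suc s + 1 - m) (Suc d + m)"
    using cc_pascal[of x "Suc s + 1 - m" "Suc d + m" for m] by simp
  have b: "FF (Suc s) (Suc d) (Suc x) = FF (Suc s) (Suc d) x +
     (\<Sum>m\<le>Suc s. real ((Suc d+m) choose m) * cc x (Suc s + 1 - m) (Suc d + m))"
    unfolding FF_def a by (simp add: sum.distrib[symmetric] algebra_simps)
  have c: "(\<Sum>m\<le>Suc s. real ((Suc d+m) choose m) * cc x (Suc s + 1 - m) (Suc d + m))
     = FF (Suc s) d x + (\<Sum>m\<le>Suc s. (real ((Suc d+m) choose m) - real ((d+m) choose m)) * cc x (Suc s + 1 - m) (Suc d + m))"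
    unfolding FF_def by (simp add: sum.distrib[symmetric] algebra_simps)
  have d: "(\<Sum>m\<le>Suc s. (real ((Suc d+m) choose m) - real ((d+m) choose m)) * cc x (Suc s + 1 - m) (Suc d + m))
     = FF s (Suc d) x"
    unfolding FF_def sum.atMost_Suc_shift by simp
  show ?thesis using b c d by simp
qed

lemma EE_s0: "EE 0 d x = FF 0 d x"
proof (induction d)
  case 0
  then show ?case
    by (cases x) (auto simp: EE_def FF_def GG_def cc_def)
next
  case (Suc d)
  have e: "EE 0 (Suc d) x = - EE 0 d x + real (x choose (d+2))"
    unfolding EE_def GG_def by (simp add: algebra_simps)
  have f: "FF 0 (Suc d) x = - FF 0 d x + real (x choose (d+2))"
  proof (cases x)
    case 0 then show ?thesis by (simp add: FF_def cc_def)
  next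
    case (Suc y)
    then show ?thesis by (simp add: FF_def cc_def)
  qed
  show ?case using e f Suc by simp
qed

lemma d0_aux: "real (x choose (s+1)) - (if s+1 \<le> x then 1 else 0) = (\<Sum>m\<le>s. cc x (s+1-m) (m+1))"
proof (induction x arbitrary: s)
  case 0
  then show ?case by (simp add: cc_def)
next
  case (Suc x)
  have r: "(\<Sum>m\<le>s. cc (Suc x) (s+1-m) (m+1)) = (\<Sum>m\<le>s. cc x (s+1-m) (m+1)) + (\<Sum>m\<le>s. cc x (s+1-m) m)"
    by (simp add: cc_pascal sum.distrib)
  have q: "(\<Sum>m\<le>s. cc x (s+1-m) m) = real (x choose s) - (if s \<le> x then 1 else 0) + (if s+1 \<le> x then 1 else 0)"
  proof (cases s)
    case 0 then show ?thesis by (simp add: cc_def)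
  next
    case (Suc s')
    have "(\<Sum>m\<le>s. cc x (s+1-m) m) = cc x (s'+2) 0 + (\<Sum>m\<le>s'. cc x (s'+1-m) (m+1))"
      unfolding Suc sum.atMost_Suc_shift by simp
    then show ?thesis using Suc.IH[of s'] Suc by (simp add: cc_def)
  qed
  show ?case using r q Suc.IH[of s] by auto
qed

lemma EE_d0: "EE s 0 x = FF s 0 x"
  using d0_aux[of x s] by (simp add: EE_def GG_def FF_def add.commute)

lemma EE_FF: "EE s d x = FF s d x"
proof (induction x arbitrary: s d)
  case 0
  then show ?case by (simp add: EE_def GG_def FF_def cc_def)
next
  case (Suc x)
  show ?case
  proof (cases s)
    case 0 then show ?thesis by (simp add: EE_s0)
  next
    case (Suc s')
    show ?thesis
    proof (cases d)
      case 0 then show ?thesis by (simp add: EE_d0)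
    next
      case (Suc d')
      show ?thesis using EE_step FF_step \<open>s = Suc s'\<close> Suc Suc.IH by metis
    qed
  qed
qed

lemma G_conv:
  "(\<Sum>j=Suc s..Suc s + d. (-1::real)^(Suc s+j) * real ((j-1) choose s) * real (x choose j)) = GG s d x"
proof -
  have "(\<Sum>j=Suc s..Suc s + d. (-1::real)^(Suc s+j) * real ((j-1) choose s) * real (x choose j))
     = (\<Sum>t=0..d. (-1::real)^(Suc s+(t + Suc s)) * real ((t + Suc s - 1) choose s) * real (x choose (t + Suc s)))"
    using sum.shift_bounds_cl_nat_ivl[of "\<lambda>j. (-1::real)^(Suc s+j) * real ((j-1) choose s) * real (x choose j)" 0 "Suc s" d]
    by (simp add: add.commute)
  also have "\<dots> = GG s d x"
    unfolding GG_def atLeast0AtMost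
  proof (rule sum.cong[OF refl])
    fix t
    have ex: "Suc s + (t + Suc s) = t + 2 * Suc s" by simp
    have "(-1::real)^(Suc s+(t + Suc s)) = (-1)^t"
      unfolding ex by (simp add: power_add power_mult)
    then show "(-1::real)^(Suc s+(t + Suc s)) * real ((t + Suc s - 1) choose s) * real (x choose (t + Suc s))
        = (-1)^t * real ((s+t) choose s) * real (x choose (s+1+t))"
      by (simp add: add.commute)
  qed
  finally show ?thesis .
qed

lemma F_conv:
  "(\<Sum>i=1..Suc s. real ((Suc s + d - i) choose (Suc s - i)) * real ((x - i) choose (Suc s + d + 1 - i))) = FF s d x"
proof -
  have "(\<Sum>i=1..Suc s. real ((Suc s + d - i) choose (Suc s - i)) * real ((x - i) choose (Suc s + d + 1 - i)))
    = (\<Sum>m\<le>s. real ((Suc s + d - (Suc s - m)) choose (Suc s - (Suc s - m))) * real ((x - (Suc s - m)) choose (Suc s + d + 1 - (Suc s - m))))"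
    apply (rule sum.reindex_bij_witness[where i="\<lambda>m. Suc s - m" and j="\<lambda>i. Suc s - i"])
    apply (simp_all add: Suc_diff_le)
    apply linarith
    done
  also have "\<dots> = FF s d x"
    unfolding FF_def
  proof (rule sum.cong[OF refl])
    fix m assume "m \<in> {..s}"
    then have m: "m \<le> s" by simp
    have e1: "Suc s + d - (Suc s - m) = d + m" "Suc s - (Suc s - m) = m" "Suc s + d + 1 - (Suc s - m) = Suc (d + m)"
      "s + 1 - m = Suc s - m" "d + 1 + m = Suc (d+m)"
      using m by auto
    show "real ((Suc s + d - (Suc s - m)) choose (Suc s - (Suc s - m))) * real ((x - (Suc s - m)) choose (Suc s + d + 1 - (Suc s - m)))
        = real ((d+m) choose m) * cc x (s+1-m) (d+1+m)"
      unfolding e1 cc_pos by simp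
  qed
  finally show ?thesis .
qed

lemma pointwise:
  assumes "1 \<le> r" "r \<le> k"
  shows "(if r \<le> x then 1 else 0) = (\<Sum>j=r..k. (-1::real)^(r+j) * real ((j-1) choose (r-1)) * real (x choose j))
     + (-1)^(k-r+1) * (\<Sum>i=1..r. real ((k-i) choose (r-i)) * real ((x-i) choose (k+1-i)))"
proof -
  define s where "s = r - 1"
  define d where "d = k - r"
  have sd: "r = Suc s" "k = Suc s + d" using assms unfolding s_def d_def by auto
  have e: "EE s d x = FF s d x" by (rule EE_FF)
  have sq: "(-1::real)^(d+1) * (-1)^(d+1) = 1"
    by (cases "even (d+1)") auto
  have h: "(if s+1 \<le> x then 1 else 0) - GG s d x = (-1)^(d+1) * FF s d x"
  proof -
    let ?X = "(if s+1 \<le> x then 1 else 0) - GG s d x"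
    have "?X = ((-1::real)^(d+1) * (-1)^(d+1)) * ?X" using sq by simp
    also have "\<dots> = (-1)^(d+1) * EE s d x" unfolding EE_def by (simp only: mult.assoc)
    finally show ?thesis using e by simp
  qed
  have g: "(\<Sum>j=r..k. (-1::real)^(r+j) * real ((j-1) choose (r-1)) * real (x choose j)) = GG s d x"
    unfolding sd diff_Suc_1 by (rule G_conv)
  have f: "(\<Sum>i=1..r. real ((k-i) choose (r-i)) * real ((x-i) choose (k+1-i))) = FF s d x"
    unfolding sd by (rule F_conv)
  have kr: "k - r + 1 = d + 1" using sd by simp
  show ?thesis unfolding g f kr using h sd by simp
qed



lemma cnt_top:
  fixes I :: "nat set"
  assumes "finite I"
  shows "card {a\<in>I. i \<le> card {b\<in>I. a<b}} = card I - i"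
  using assms
proof (induction I arbitrary: i rule: finite_linorder_max_induct)
  case empty
  then show ?case by simp
next
  case (insert b A)
  have bA: "b \<notin> A" using insert.hyps by auto
  have c1: "\<And>a. a \<in> A \<Longrightarrow> card {c\<in>insert b A. a<c} = Suc (card {c\<in>A. a<c})"
  proof -
    fix a assume "a \<in> A"
    then have "{c\<in>insert b A. a<c} = insert b {c\<in>A. a<c}" using insert.hyps by auto
    then show "card {c\<in>insert b A. a<c} = Suc (card {c\<in>A. a<c})"
      using bA insert.hyps(1) by simp
  qed
  have c2: "card {c\<in>insert b A. b<c} = 0"
  proof -
    have "{c\<in>insert b A. b<c} = {}" using insert.hyps by auto
    then show ?thesis by (metis card.empty)
  qed
  show ?case
  proof (cases i)
    case 0
    have "{a\<in>insert b A. i \<le> card {c\<in>insert b A. a<c}} = insert b A" using 0 by auto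
    then show ?thesis using 0 by simp
  next
    case (Suc j)
    have "{a\<in>insert b A. i \<le> card {c\<in>insert b A. a<c}} = {a\<in>A. j \<le> card {c\<in>A. a<c}}"
      using c1 c2 Suc by auto
    then show ?thesis using insert.IH[of j] Suc bA insert.hyps(1) by simp
  qed
qed

lemma N_count:
  fixes I :: "nat set"
  assumes "finite I" "1 \<le> m"
  shows "card {R. R \<subseteq> I \<and> card R = m \<and> i \<le> card {b\<in>I. Max R < b}} = (card I - i) choose m"
proof -
  let ?I' = "{a\<in>I. i \<le> card {b\<in>I. a<b}}"
  have "{R. R \<subseteq> I \<and> card R = m \<and> i \<le> card {b\<in>I. Max R < b}} = {R. R \<subseteq> ?I' \<and> card R = m}"
  proof (intro set_eqI iffI)
    fix R assume R: "R \<in> {R. R \<subseteq> I \<and> card R = m \<and> i \<le> card {b\<in>I. Max R < b}}"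
    then have fR: "finite R" using assms(1) finite_subset by blast
    have "R \<subseteq> ?I'"
    proof
      fix a assume a: "a \<in> R"
      then have "a \<le> Max R" using fR by simp
      then have "{b\<in>I. Max R < b} \<subseteq> {b\<in>I. a < b}" by auto
      then have "card {b\<in>I. Max R < b} \<le> card {b\<in>I. a < b}"
        by (rule card_mono[rotated]) (use assms(1) in simp)
      then show "a \<in> ?I'" using R a by auto
    qed
    then show "R \<in> {R. R \<subseteq> ?I' \<and> card R = m}" using R by simp
  next
    fix R assume R: "R \<in> {R. R \<subseteq> ?I' \<and> card R = m}"
    then have fR: "finite R" using assms(1) finite_subset[of R I] by auto
    have "R \<noteq> {}" using R assms(2) by auto
    then have "Max R \<in> R" using fR by simp
    then show "R \<in> {R. R \<subseteq> I \<and> card R = m \<and> i \<le> card {b\<in>I. Max R < b}}" using R by auto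
  qed
  then show ?thesis using n_subsets[of ?I' m] cnt_top[OF assms(1), of i] assms(1) by simp
qed

lemma main_meas:
  fixes M :: "'a measure" and A :: "nat \<Rightarrow> 'a set" and n :: nat
  assumes "prob_space M"
    and As: "\<And>i. i \<in> {1..n} \<Longrightarrow> A i \<in> sets M"
  defines "Iw \<equiv> \<lambda>w. {i\<in>{1..n}. w \<in> A i}"
  defines "p \<equiv> \<lambda>I. measure M {w\<in>space M. Iw w = I}"
  shows "\<And>Q. measure M {w\<in>space M. Q (Iw w)} = (\<Sum>I\<in>Pow {1..n}. if Q I then p I else 0)"
    and "\<And>I. p I \<ge> 0"
    and "\<And>J. J \<subseteq> {1..n} \<Longrightarrow> J \<noteq> {} \<Longrightarrow>
          measure M (\<Inter>i\<in>J. A i) = (\<Sum>I\<in>Pow {1..n}. if J \<subseteq> I then p I else 0)"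
proof -
  interpret P: prob_space M by fact
  define B where "B I = {w\<in>space M. Iw w = I}" for I
  have Bsets: "B I \<in> sets M" for I
  proof -
    have "B I = {w\<in>space M. (\<forall>i\<in>{1..n}. (w \<in> A i) = (i \<in> I)) \<and> I \<subseteq> {1..n}}"
      unfolding B_def Iw_def by auto
    also have "\<dots> \<in> sets M"
    proof (intro sets.sets_Collect_conj sets.sets_Collect_finite_All sets.sets_Collect_const)
      fix i assume i: "i \<in> {1..n}"
      show "{w\<in>space M. (w \<in> A i) = (i \<in> I)} \<in> sets M"
      proof (cases "i \<in> I")
        case True
        then have "{w\<in>space M. (w \<in> A i) = (i \<in> I)} = A i"
          using sets.sets_into_space[OF As[OF i]] by auto
        then show ?thesis using As[OF i] by simp
      next
        case False
        then have "{w\<in>space M. (w \<in> A i) = (i \<in> I)} = space M - A i" by auto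
        then show ?thesis using As[OF i] by auto
      qed
    qed simp
    finally show ?thesis .
  qed
  show decomp: "measure M {w\<in>space M. Q (Iw w)} = (\<Sum>I\<in>Pow {1..n}. if Q I then p I else 0)" for Q
  proof -
    have "{w\<in>space M. Q (Iw w)} = (\<Union>I\<in>{I\<in>Pow {1..n}. Q I}. B I)"
      unfolding B_def Iw_def by auto
    then have "measure M {w\<in>space M. Q (Iw w)} = (\<Sum>I\<in>{I\<in>Pow {1..n}. Q I}. measure M (B I))"
      using P.finite_measure_finite_Union[of "{I\<in>Pow {1..n}. Q I}" B] Bsets
      by (auto simp: disjoint_family_on_def B_def)
    also have "\<dots> = (\<Sum>I\<in>Pow {1..n}. if Q I then p I else 0)"
      unfolding p_def B_def by (intro sum.inter_filter) simp
    finally show ?thesis .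
  qed
  show "p I \<ge> 0" for I unfolding p_def by simp
  show "measure M (\<Inter>i\<in>J. A i) = (\<Sum>I\<in>Pow {1..n}. if J \<subseteq> I then p I else 0)"
    if JJ: "J \<subseteq> {1..n}" "J \<noteq> {}" for J
  proof -
    have "(\<Inter>i\<in>J. A i) = {w\<in>space M. J \<subseteq> Iw w}"
    proof -
      obtain j where j: "j \<in> J" using JJ by auto
      have "j \<in> {1..n}" using j JJ by auto
      then have "A j \<subseteq> space M" using sets.sets_into_space[OF As] by blast
      then show ?thesis using j JJ unfolding Iw_def by auto
    qed
    then show ?thesis using decomp[of "\<lambda>I. J \<subseteq> I"] by simp
  qed
qed

theorem theorem4:
  fixes M :: "'a measure" and A :: "nat \<Rightarrow> 'a set" and n r k :: nat
  assumes "prob_space M"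
    and "\<And>i. i \<in> {1..n} \<Longrightarrow> A i \<in> sets M"
    and "1 \<le> r" and "r \<le> k" and "k < n"
  shows "(odd (r + k) \<longrightarrow>
           measure M {w \<in> space M. num_occ A n w \<ge> r} \<ge>
             (\<Sum>j=r..k. (-1) ^ (r + j) * real ((j - 1) choose (r - 1)) * S_sum M A n j)
             + (\<Sum>i=1..r. real ((k - i) choose (r - i)) * M_sum M A n k i))
       \<and> (even (r + k) \<longrightarrow>
           measure M {w \<in> space M. num_occ A n w \<ge> r} \<le>
             (\<Sum>j=r..k. (-1) ^ (r + j) * real ((j - 1) choose (r - 1)) * S_sum M A n j)
             - (\<Sum>i=1..r. real ((k - i) choose (r - i)) * M_sum M A n k i))"
proof -
  define Iw where "Iw \<equiv> \<lambda>w. {i\<in>{1..n}. w \<in> A i}"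
  define p where "p \<equiv> \<lambda>I. measure M {w\<in>space M. Iw w = I}"
  have mm1: "\<And>Q. measure M {w\<in>space M. Q (Iw w)} = (\<Sum>I\<in>Pow {1..n}. if Q I then p I else 0)"
    using main_meas(1)[where M=M and A=A and n=n, OF assms(1,2)] unfolding Iw_def p_def by blast
  have mm2: "\<And>I. p I \<ge> 0" unfolding p_def by simp
  have mm3: "\<And>J. J \<subseteq> {1..n} \<Longrightarrow> J \<noteq> {} \<Longrightarrow>
          measure M (\<Inter>i\<in>J. A i) = (\<Sum>I\<in>Pow {1..n}. if J \<subseteq> I then p I else 0)"
    using main_meas(3)[where M=M and A=A and n=n, OF assms(1,2)] unfolding Iw_def p_def by blast
  note mm = mm1 mm2 mm3
  let ?PP = "Pow {1..n}"
  have fin: "finite ?PP" by simp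
  have L: "measure M {w\<in>space M. num_occ A n w \<ge> r} = (\<Sum>I\<in>?PP. (if r \<le> card I then p I else 0))"
  proof -
    have "{w\<in>space M. num_occ A n w \<ge> r} = {w\<in>space M. (\<lambda>I. r \<le> card I) (Iw w)}"
      by (simp add: num_occ_def Iw_def)
    then show ?thesis using mm(1)[where Q="\<lambda>I. r \<le> card I"] by simp
  qed
  have S: "S_sum M A n j = (\<Sum>I\<in>?PP. real (card I choose j) * p I)" if j: "1 \<le> j" for j
  proof -
    let ?Js = "{J. J \<subseteq> {1..n} \<and> card J = j}"
    have finJ: "finite ?Js" by (rule finite_subset[of _ "Pow {1..n}"]) auto
    have "S_sum M A n j = (\<Sum>J\<in>?Js. \<Sum>I\<in>?PP. if J \<subseteq> I then p I else 0)"
      unfolding S_sum_def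
    proof (rule sum.cong[OF refl])
      fix J assume "J \<in> ?Js"
      then have "J \<subseteq> {1..n}" "J \<noteq> {}" using j by auto
      then show "measure M (\<Inter>i\<in>J. A i) = (\<Sum>I\<in>?PP. if J \<subseteq> I then p I else 0)" by (rule mm(3))
    qed
    also have "\<dots> = (\<Sum>I\<in>?PP. \<Sum>J\<in>?Js. if J \<subseteq> I then p I else 0)" by (rule sum.swap)
    also have "\<dots> = (\<Sum>I\<in>?PP. real (card I choose j) * p I)"
    proof (rule sum.cong[OF refl])
      fix I assume I: "I \<in> ?PP"
      have "(\<Sum>J\<in>?Js. if J \<subseteq> I then p I else 0) = (\<Sum>J\<in>{J\<in>?Js. J \<subseteq> I}. p I)"
        by (rule sum.inter_filter[OF finJ, symmetric])
      also have "\<dots> = real (card {J\<in>?Js. J \<subseteq> I}) * p I" by simp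
      also have "{J\<in>?Js. J \<subseteq> I} = {J. J \<subseteq> I \<and> card J = j}" using I by auto
      also have "card {J. J \<subseteq> I \<and> card J = j} = card I choose j"
        using I finite_subset[of I "{1..n}"] by (intro n_subsets) auto
      finally show "(\<Sum>J\<in>?Js. if J \<subseteq> I then p I else 0) = real (card I choose j) * p I" .
    qed
    finally show ?thesis .
  qed
  have Mb: "M_sum M A n k i \<le> (\<Sum>I\<in>?PP. real ((card I - i) choose (k+1-i)) * p I)"
    if i: "1 \<le> i" "i \<le> r" for i
  proof -
    let ?Rs = "{R. R \<subseteq> {1..n} \<and> card R = k + 1 - i}"
    have finR: "finite ?Rs" by (rule finite_subset[of _ "Pow {1..n}"]) auto
    define bnd where "bnd R = (\<Sum>I\<in>?PP. if R \<subseteq> I \<and> i \<le> card {b\<in>I. Max R < b} then p I else 0)" for R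
    have bnn: "bnd R \<ge> 0" for R unfolding bnd_def by (intro sum_nonneg) (simp add: mm(2))
    have each: "max0 ((\<lambda>U. measure M (\<Inter>j\<in>R \<union> U. A j)) ` T_set n R i) \<le> bnd R" if R: "R \<in> ?Rs" for R
    proof -
      have Rne: "R \<noteq> {}" using R i assms(4) by auto
      have finT: "finite (T_set n R i)"
        by (rule finite_subset[of _ "Pow {Max R<..n}"]) (auto simp: T_set_def)
      have le: "measure M (\<Inter>j\<in>R \<union> U. A j) \<le> bnd R" if U: "U \<in> T_set n R i" for U
      proof -
        have RU: "R \<union> U \<subseteq> {1..n}" "R \<union> U \<noteq> {}" using R U Rne by (auto simp: T_set_def)
        have "measure M (\<Inter>j\<in>R \<union> U. A j) = (\<Sum>I\<in>?PP. if R \<union> U \<subseteq> I then p I else 0)"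
          using mm(3)[OF RU] .
        also have "\<dots> \<le> bnd R" unfolding bnd_def
        proof (rule sum_mono)
          fix I assume I: "I \<in> ?PP"
          show "(if R \<union> U \<subseteq> I then p I else 0) \<le> (if R \<subseteq> I \<and> i \<le> card {b\<in>I. Max R < b} then p I else 0)"
          proof (cases "R \<union> U \<subseteq> I")
            case True
            then have "U \<subseteq> {b\<in>I. Max R < b}" using U by (auto simp: T_set_def)
            then have "card U \<le> card {b\<in>I. Max R < b}"
              using I finite_subset[of I "{1..n}"] by (intro card_mono) auto
            then show ?thesis using True U by (auto simp: T_set_def)
          qed (auto simp: mm(2))
        qed
        finally show ?thesis .
      qed
      show ?thesis
      proof (cases "T_set n R i = {}")
        case True then show ?thesis by (simp add: max0_def bnn)
      next
        case False
        then show ?thesis unfolding max0_def using finT le by (simp add: Max_le_iff)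
      qed
    qed
    have "M_sum M A n k i \<le> (\<Sum>R\<in>?Rs. bnd R)"
      unfolding M_sum_def by (rule sum_mono) (rule each)
    also have "\<dots> = (\<Sum>I\<in>?PP. \<Sum>R\<in>?Rs. if R \<subseteq> I \<and> i \<le> card {b\<in>I. Max R < b} then p I else 0)"
      unfolding bnd_def by (rule sum.swap)
    also have "\<dots> = (\<Sum>I\<in>?PP. real ((card I - i) choose (k+1-i)) * p I)"
    proof (rule sum.cong[OF refl])
      fix I assume I: "I \<in> ?PP"
      have fI: "finite I" using I finite_subset[of I "{1..n}"] by auto
      have "(\<Sum>R\<in>?Rs. if R \<subseteq> I \<and> i \<le> card {b\<in>I. Max R < b} then p I else 0)
          = (\<Sum>R\<in>{R\<in>?Rs. R \<subseteq> I \<and> i \<le> card {b\<in>I. Max R < b}}. p I)"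
        by (rule sum.inter_filter[OF finR, symmetric])
      also have "\<dots> = real (card {R\<in>?Rs. R \<subseteq> I \<and> i \<le> card {b\<in>I. Max R < b}}) * p I" by simp
      also have "{R\<in>?Rs. R \<subseteq> I \<and> i \<le> card {b\<in>I. Max R < b}}
          = {R. R \<subseteq> I \<and> card R = k + 1 - i \<and> i \<le> card {b\<in>I. Max R < b}}" using I by auto
      also have "card \<dots> = (card I - i) choose (k + 1 - i)"
        using i assms(4) by (intro N_count fI) auto
      finally show "(\<Sum>R\<in>?Rs. if R \<subseteq> I \<and> i \<le> card {b\<in>I. Max R < b} then p I else 0)
          = real ((card I - i) choose (k+1-i)) * p I" .
    qed
    finally show ?thesis .
  qed
  define GI where "GI x = (\<Sum>j=r..k. (-1::real)^(r+j) * real ((j-1) choose (r-1)) * real (x choose j))" for x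
  define FI where "FI x = (\<Sum>i=1..r. real ((k-i) choose (r-i)) * real ((x-i) choose (k+1-i)))" for x
  have FInn: "FI x \<ge> 0" for x unfolding FI_def by (intro sum_nonneg) simp
  have SS: "(\<Sum>j=r..k. (-1) ^ (r + j) * real ((j - 1) choose (r - 1)) * S_sum M A n j)
      = (\<Sum>I\<in>?PP. p I * GI (card I))"
  proof -
    have "(\<Sum>j=r..k. (-1) ^ (r + j) * real ((j - 1) choose (r - 1)) * S_sum M A n j)
      = (\<Sum>j=r..k. \<Sum>I\<in>?PP. (-1) ^ (r + j) * real ((j - 1) choose (r - 1)) * (real (card I choose j) * p I))"
      by (rule sum.cong[OF refl]) (use assms(3) in \<open>simp add: S sum_distrib_left\<close>)
    also have "\<dots> = (\<Sum>I\<in>?PP. \<Sum>j=r..k. (-1) ^ (r + j) * real ((j - 1) choose (r - 1)) * (real (card I choose j) * p I))"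
      by (rule sum.swap)
    also have "\<dots> = (\<Sum>I\<in>?PP. p I * GI (card I))"
      unfolding GI_def by (simp add: sum_distrib_left mult_ac)
    finally show ?thesis .
  qed
  have MM: "(\<Sum>i=1..r. real ((k - i) choose (r - i)) * M_sum M A n k i) \<le> (\<Sum>I\<in>?PP. p I * FI (card I))"
  proof -
    have "(\<Sum>i=1..r. real ((k - i) choose (r - i)) * M_sum M A n k i)
       \<le> (\<Sum>i=1..r. \<Sum>I\<in>?PP. real ((k - i) choose (r - i)) * (real ((card I - i) choose (k+1-i)) * p I))"
    proof (rule sum_mono)
      fix i assume "i \<in> {1..r}"
      then have "M_sum M A n k i \<le> (\<Sum>I\<in>?PP. real ((card I - i) choose (k+1-i)) * p I)" using Mb by auto
      then show "real ((k - i) choose (r - i)) * M_sum M A n k i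
          \<le> (\<Sum>I\<in>?PP. real ((k - i) choose (r - i)) * (real ((card I - i) choose (k+1-i)) * p I))"
        by (simp add: sum_distrib_left[symmetric] mult_left_mono)
    qed
    also have "\<dots> = (\<Sum>I\<in>?PP. \<Sum>i=1..r. real ((k - i) choose (r - i)) * (real ((card I - i) choose (k+1-i)) * p I))"
      by (rule sum.swap)
    also have "\<dots> = (\<Sum>I\<in>?PP. p I * FI (card I))"
      unfolding FI_def by (simp add: sum_distrib_left mult_ac)
    finally show ?thesis .
  qed
  have LL: "measure M {w\<in>space M. num_occ A n w \<ge> r}
      = (\<Sum>I\<in>?PP. p I * GI (card I)) + (-1)^(k-r+1) * (\<Sum>I\<in>?PP. p I * FI (card I))"
  proof -
    have "measure M {w\<in>space M. num_occ A n w \<ge> r}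
       = (\<Sum>I\<in>?PP. p I * GI (card I) + (-1)^(k-r+1) * (p I * FI (card I)))"
      unfolding L
    proof (rule sum.cong[OF refl])
      fix I :: "nat set"
      have h: "(if r \<le> card I then 1 else 0) = GI (card I) + (-1)^(k-r+1) * FI (card I)"
        unfolding GI_def FI_def by (rule pointwise[OF assms(3,4)])
      have e2: "(if r \<le> card I then p I else 0) = (GI (card I) + (-1)^(k-r+1) * FI (card I)) * p I"
        by (subst h[symmetric]) simp
      then show "(if r \<le> card I then p I else 0) = p I * GI (card I) + (-1)^(k-r+1) * (p I * FI (card I))"
        by (simp add: algebra_simps)
    qed
    then show ?thesis by (simp only: sum.distrib sum_distrib_left)
  qed
  show ?thesis
  proof (intro conjI impI)
    assume "odd (r + k)"
    then have "even (k - r + 1)" using assms(4) by presburger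
    then have e: "(-1::real)^(k-r+1) = 1" by simp
    have LL': "measure M {w\<in>space M. num_occ A n w \<ge> r}
      = (\<Sum>I\<in>?PP. p I * GI (card I)) + (\<Sum>I\<in>?PP. p I * FI (card I))"
      using LL unfolding e mult_1 .
    then show "measure M {w \<in> space M. num_occ A n w \<ge> r} \<ge>
             (\<Sum>j=r..k. (-1) ^ (r + j) * real ((j - 1) choose (r - 1)) * S_sum M A n j)
             + (\<Sum>i=1..r. real ((k - i) choose (r - i)) * M_sum M A n k i)"
      using LL' SS MM by linarith
  next
    assume "even (r + k)"
    then have "odd (k - r + 1)" using assms(4) by presburger
    then have e: "(-1::real)^(k-r+1) = -1" by simp
    have LL': "measure M {w\<in>space M. num_occ A n w \<ge> r}
      = (\<Sum>I\<in>?PP. p I * GI (card I)) + - (\<Sum>I\<in>?PP. p I * FI (card I))"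
      using LL unfolding e mult_minus1 .
    then show "measure M {w \<in> space M. num_occ A n w \<ge> r} \<le>
             (\<Sum>j=r..k. (-1) ^ (r + j) * real ((j - 1) choose (r - 1)) * S_sum M A n j)
             - (\<Sum>i=1..r. real ((k - i) choose (r - i)) * M_sum M A n k i)"
      using LL' SS MM by linarith
  qed
qed

end
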